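(* For every $n\geq1$, $Z_{\mathbb{A}_n}$ is the disjoint union of (an open subvariety isomorphic to) $Y_{\mathbb{A}_n}$ and (a closed subvariety isomorphic to) $Y_{\mathbb{A}_{n-1}}$. The number of points of $Z_{\mathbb{A}_n}$ over $\mathbb{F}_q$ is $q^{n+1}$.
   Context: For $n\ge1$, $Z_{\mathbb{A}_n}$ is the affine variety in variables $(\alpha,x_1,\dots,x_n,x'_1,\dots,x'_n)$ ($\alpha$ arbitrary) defined by $x_1x'_1=1+\alpha x_2$, $x_ix'_i=1+x_{i-1}x_{i+1}$ for $2\le i\le n-1$, $x_nx'_n=1+x_{n-1}$ (for $n=1$: $x_1x'_1=1+\alpha$). $Y_{\mathbb{A}_n}$ is the open subvariety where $\alpha\neq0$ (the union of the fibers $X_n(\alpha)$ over invertible $\alpha$); by convention $Y_{\mathbb{A}_0}=\mathbb{A}^1\setminus\{0\}$. *)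

theory Defs
  imports Main
begin

text \<open>Points are lists p of length 2n+1: p!0 = alpha, p!i = x_i, p!(n+i) = x'_i (1 \<le> i \<le> n).
  The exchange relation for index i reads x_i x'_i = 1 + x_{i-1} x_{i+1}, with the
  conventions x_0 = alpha and x_{n+1} = 1.  For n = 0 this gives the set of length-1 lists.\<close>

definition Z_A :: "nat \<Rightarrow> 'k::field list set" where
  "Z_A n = {p. length p = 2*n+1 \<and>
     (\<forall>i\<in>{1..n}. p!i * p!(n+i) = 1 + p!(i-1) * (if i < n then p!(i+1) else 1))}"

definition Y_A :: "nat \<Rightarrow> 'k::field list set" where
  "Y_A n = {p \<in> Z_A n. p!0 \<noteq> 0}"

definition Z0_A :: "nat \<Rightarrow> 'k::field list set" where
  "Z0_A n = {p \<in> Z_A n. p!0 = 0}"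

text \<open>Regular functions: expressions in the coordinates with integer constants, allowing the
  inverse of a coordinate (only where that coordinate does not vanish).\<close>
datatype rexpr = RVar nat | RConst int | RAdd rexpr rexpr | RMul rexpr rexpr | RNeg rexpr
  | RInv nat

fun reval :: "rexpr \<Rightarrow> 'k::field list \<Rightarrow> 'k" where
  "reval (RVar i) p = p!i"
| "reval (RConst c) p = of_int c"
| "reval (RAdd a b) p = reval a p + reval b p"
| "reval (RMul a b) p = reval a p * reval b p"
| "reval (RNeg a) p = - reval a p"
| "reval (RInv i) p = inverse (p!i)"

fun rinvs :: "rexpr \<Rightarrow> nat set" where
  "rinvs (RVar i) = {}"
| "rinvs (RConst c) = {}"
| "rinvs (RAdd a b) = rinvs a \<union> rinvs b"
| "rinvs (RMul a b) = rinvs a \<union> rinvs b"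
| "rinvs (RNeg a) = rinvs a"
| "rinvs (RInv i) = {i}"

definition regular_map_on :: "'k::field list set \<Rightarrow> rexpr list \<Rightarrow> bool" where
  "regular_map_on X fs = (\<forall>e\<in>set fs. \<forall>i\<in>rinvs e. \<forall>p\<in>X. p!i \<noteq> 0)"

definition rapply :: "rexpr list \<Rightarrow> 'k::field list \<Rightarrow> 'k list" where
  "rapply fs p = map (\<lambda>e. reval e p) fs"

definition reg_iso :: "'k::field list set \<Rightarrow> 'k list set \<Rightarrow> bool" where
  "reg_iso X Y = (\<exists>f g. regular_map_on X f \<and> regular_map_on Y g \<and>
     (\<forall>p\<in>X. rapply f p \<in> Y \<and> rapply g (rapply f p) = p) \<and>
     (\<forall>q\<in>Y. rapply g q \<in> X \<and> rapply f (rapply g q) = q))"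

end

theory Submission
  imports Defs
begin

declare upt_Suc[simp del]

fun ok :: "'a::field \<Rightarrow> 'a list \<Rightarrow> 'a list \<Rightarrow> bool" where
  "ok c [x] [] = True"
| "ok c (x # x1 # xs) (y # ys) = (x*y = 1 + x1*c \<and> ok x (x1#xs) ys)"
| "ok c _ _ = False"

definition PP :: "nat \<Rightarrow> 'a::field \<Rightarrow> ('a list \<times> 'a list) set" where
  "PP n c = {(xs,ys). length xs = Suc n \<and> ok c xs ys}"

definition HH :: "nat \<Rightarrow> 'a::field \<Rightarrow> ('a list \<times> 'a list) set" where
  "HH n d = {(xs,ys). (xs,ys) \<in> PP n 0 \<and> hd xs = d}"

lemma ok_len: "ok c xs ys \<Longrightarrow> length xs = Suc (length ys)"
  by (induction c xs ys rule: ok.induct) auto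

lemma finite_len: "finite {xs :: 'a::finite list. length xs = n}"
  using finite_lists_length_eq[OF finite_UNIV[where 'a='a], of n] by simp

lemma PP_finite: "finite (PP n (c::'a::{finite,field}))"
proof -
  have "PP n c \<subseteq> {xs. length xs = Suc n} \<times> {ys. length ys = n}"
    unfolding PP_def using ok_len by fastforce
  thus ?thesis by (rule finite_subset) (intro finite_cartesian_product finite_len)
qed

lemma PP0: "PP 0 c = (\<lambda>x. ([x],[])) ` UNIV"
proof -
  have "ok c [x] ys \<longleftrightarrow> ys = []" for x ys by (cases ys) auto
  thus ?thesis unfolding PP_def by (auto simp: length_Suc_conv)
qed

lemma card_PP0: "card (PP 0 (c::'a::{finite,field})) = card (UNIV :: 'a set)"
  unfolding PP0 by (subst card_image) (auto intro: inj_onI)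

lemma HH0: "HH 0 d = {([d],[])}"
  unfolding HH_def PP0 by auto

lemma HH_Suc: "d \<noteq> 0 \<Longrightarrow> HH (Suc m) d = (\<lambda>(xs,ys). (d#xs, (1/d)#ys)) ` PP m d"
proof -
  assume d: "d \<noteq> 0"
  show ?thesis
  proof (rule set_eqI, rule iffI)
    fix p assume "p \<in> HH (Suc m) d"
    then obtain xs ys where p: "p = (xs,ys)" "length xs = Suc (Suc m)" "ok 0 xs ys" "hd xs = d"
      unfolding HH_def PP_def by auto
    then obtain x1 xs' where xs: "xs = d # x1 # xs'" by (auto simp: length_Suc_conv)
    with p obtain y ys' where ys: "ys = y # ys'" by (cases ys) auto
    from p xs ys d have "y = 1/d" "ok d (x1#xs') ys'" by (auto simp: field_simps)
    thus "p \<in> (\<lambda>(xs,ys). (d#xs, (1/d)#ys)) ` PP m d" using p xs ys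
      by (auto simp: PP_def image_iff intro!: exI[of _ "x1#xs'"])
  next
    fix p assume "p \<in> (\<lambda>(xs,ys). (d#xs, (1/d)#ys)) ` PP m d"
    then obtain xs ys where p: "p = (d#xs, (1/d)#ys)" "length xs = Suc m" "ok d xs ys"
      unfolding PP_def by auto
    then obtain x1 xs' where "xs = x1 # xs'" by (auto simp: length_Suc_conv)
    thus "p \<in> HH (Suc m) d" using p d unfolding HH_def PP_def by auto
  qed
qed

lemma card_HH: "d \<noteq> 0 \<Longrightarrow> card (HH m (d::'a::{finite,field})) = (if m = 0 then 1 else card (PP (m-1) d))"
  apply (cases m)
   apply (simp add: HH0)
  apply (simp add: HH_Suc)
  apply (subst card_image)
   apply (auto intro!: inj_onI)
  done

lemma PP_Suc: "c \<noteq> 0 \<Longrightarrow> PP (Suc n) c =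
   (\<lambda>(x,(xs,ys)). (x#xs, ((1 + hd xs * c)/x) # ys)) ` (SIGMA x:-{0}. PP n x)
   \<union> (\<lambda>(y,(xs,ys)). (0#xs, y#ys)) ` (UNIV \<times> HH n (-1/c))" (is "_ \<Longrightarrow> _ = ?A \<union> ?B")
proof -
  assume c: "c \<noteq> 0"
  show ?thesis
  proof (rule set_eqI, rule iffI)
    fix p assume "p \<in> PP (Suc n) c"
    then obtain xs ys where p: "p = (xs,ys)" "length xs = Suc (Suc n)" "ok c xs ys"
      unfolding PP_def by auto
    then obtain x x1 xs' where xs: "xs = x # x1 # xs'" by (auto simp: length_Suc_conv)
    with p obtain y ys' where ys: "ys = y # ys'" by (cases ys) auto
    from p xs ys have e: "x*y = 1 + x1*c" and o: "ok x (x1#xs') ys'" by auto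
    show "p \<in> ?A \<union> ?B"
    proof (cases "x = 0")
      case True
      with e c have "x1 = -1/c" by (auto simp: field_simps eq_neg_iff_add_eq_0 add.commute)
      thus ?thesis using True o p xs ys
        by (auto simp: HH_def PP_def image_iff intro!: bexI[of _ "(y, x1#xs', ys')"])
    next
      case False
      with e have "y = (1 + x1*c)/x" by (auto simp: field_simps)
      thus ?thesis using False o p xs ys
        by (auto simp: PP_def image_iff intro!: bexI[of _ "(x, x1#xs', ys')"])
    qed
  next
    fix p assume "p \<in> ?A \<union> ?B"
    thus "p \<in> PP (Suc n) c"
    proof
      assume "p \<in> ?A"
      then obtain x xs ys where p: "x \<noteq> 0" "p = (x#xs, ((1 + hd xs * c)/x) # ys)"
        "length xs = Suc n" "ok x xs ys" by (auto simp: PP_def)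
      then obtain x1 xs' where "xs = x1 # xs'" by (auto simp: length_Suc_conv)
      thus ?thesis using p by (auto simp: PP_def)
    next
      assume "p \<in> ?B"
      then obtain y xs ys where p: "p = (0#xs, y # ys)"
        "length xs = Suc n" "ok 0 xs ys" "hd xs = -1/c" by (auto simp: PP_def HH_def)
      then obtain x1 xs' where "xs = x1 # xs'" by (auto simp: length_Suc_conv)
      thus ?thesis using p c by (auto simp: PP_def)
    qed
  qed
qed

lemma card_PP: "c \<noteq> 0 \<Longrightarrow> card (PP n (c::'a::{finite,field})) = card (UNIV :: 'a set) ^ Suc n"
proof (induction n arbitrary: c rule: less_induct)
  case (less n)
  let ?q = "card (UNIV :: 'a set)"
  have q1: "?q \<ge> 1" using finite_UNIV_card_ge_0[where 'a='a] by simp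
  show ?case
  proof (cases n)
    case 0 thus ?thesis by (simp add: card_PP0)
  next
    case (Suc m)
    let ?A = "(\<lambda>(x,(xs,ys)). (x#xs, ((1 + hd xs * c)/x) # ys)) ` (SIGMA x:-{0}. PP m x)"
    let ?B = "(\<lambda>(y,(xs,ys)). (0#xs, y#ys)) ` (UNIV \<times> HH m (-1/c))"
    have fH: "finite (HH m (-1/c))" unfolding HH_def
      by (rule finite_subset[OF _ PP_finite[of m 0]]) auto
    have fA: "finite ?A" by (intro finite_imageI finite_SigmaI) (auto simp: PP_finite)
    have fB: "finite ?B" using fH by (intro finite_imageI finite_SigmaI) auto
    have disj: "?A \<inter> ?B = {}" by auto
    have inA: "inj_on (\<lambda>(x,(xs,ys)). (x#xs, ((1 + hd xs * c)/x) # ys)) (SIGMA x:-{0}. PP m x)"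
      by (auto intro!: inj_onI)
    have inB: "inj_on (\<lambda>(y,(xs,ys)). (0#xs, y#ys)) (UNIV \<times> HH m (-1/c))"
      by (auto intro!: inj_onI)
    have cA: "card ?A = (?q - 1) * ?q ^ Suc m"
    proof -
      have "card ?A = (\<Sum>x\<in>-{0::'a}. card (PP m x))"
        unfolding card_image[OF inA] by (rule card_SigmaI) (auto simp: PP_finite)
      also have "\<dots> = (\<Sum>x\<in>-{0::'a}. ?q ^ Suc m)"
        by (rule sum.cong) (use less.IH[of m] Suc in auto)
      also have "\<dots> = (?q - 1) * ?q ^ Suc m"
        by (simp add: Compl_eq_Diff_UNIV card_Diff_singleton)
      finally show ?thesis .
    qed
    have cB: "card ?B = ?q * ?q ^ m"
    proof -
      have d: "-1/c \<noteq> 0" using less.prems by simp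
      have "card ?B = ?q * card (HH m (-1/c))"
        unfolding card_image[OF inB] card_cartesian_product by simp
      also have "card (HH m (-1/c)) = ?q ^ m"
      proof (cases m)
        case 0 thus ?thesis using card_HH[OF d, of m] by simp
      next
        case (Suc k)
        thus ?thesis using card_HH[OF d, of m] less.IH[of k "-1/c"] d \<open>n = Suc m\<close> by simp
      qed
      finally show ?thesis .
    qed
    have "card (PP n c) = card ?A + card ?B"
      unfolding Suc PP_Suc[OF less.prems] by (rule card_Un_disjoint[OF fA fB disj])
    also have "\<dots> = ?q ^ Suc n" unfolding cA cB Suc using q1
      by (simp add: algebra_simps)
    finally show ?thesis .
  qed
qed

lemma ok_nth: "length xs = Suc (length ys) \<Longrightarrow> ok c xs ys \<longleftrightarrow>
  (\<forall>j<length ys. xs!j * ys!j = 1 + xs!(j+1) * (if j=0 then c else xs!(j-1)))"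
proof (induction ys arbitrary: xs c)
  case Nil
  then obtain x where "xs = [x]" by (auto simp: length_Suc_conv)
  thus ?case by simp
next
  case (Cons y ys)
  then obtain x x1 xs' where xs: "xs = x # x1 # xs'" by (auto simp: length_Suc_conv)
  have IH: "ok x (x1#xs') ys \<longleftrightarrow> (\<forall>j<length ys. (x1#xs')!j * ys!j = 1 + (x1#xs')!(j+1) * (if j=0 then x else (x1#xs')!(j-1)))"
    using Cons xs by simp
  show ?case unfolding xs
    by (simp only: ok.simps IH length_Cons All_less_Suc2) (simp add: nth_Cons split: nat.splits)
qed

definition Phi :: "nat \<Rightarrow> 'a list \<Rightarrow> 'a list \<times> 'a list" where
  "Phi n p = (map (\<lambda>j. p!(n-j)) [0..<Suc n], map (\<lambda>j. p!(2*n-j)) [0..<n])"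

definition Psi :: "nat \<Rightarrow> 'a list \<Rightarrow> 'a list \<Rightarrow> 'a list" where
  "Psi n xs ys = map (\<lambda>i. if i \<le> n then xs!(n-i) else ys!(2*n-i)) [0..<2*n+1]"

lemma Phi_PP:
  assumes "p \<in> (Z_A n :: 'a::field list set)"
  shows "Phi n p \<in> PP n 1"
proof -
  have len: "length p = 2*n+1" and Z: "\<And>i. i \<in> {1..n} \<Longrightarrow>
     p!i * p!(n+i) = 1 + p!(i-1) * (if i < n then p!(i+1) else 1)"
    using assms unfolding Z_A_def by auto
  have "\<forall>j<n. p!(n-j) * p!(2*n-j) = 1 + p!(n-Suc j) * (if j=0 then 1 else p!(n-(j-1)))"
  proof (intro allI impI)
    fix j assume j: "j < n"
    have e: "n - j \<in> {1..n}" using j by auto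
    have 1: "n + (n-j) = 2*n-j" "n-j-1 = n - Suc j" using j by auto
    show "p!(n-j) * p!(2*n-j) = 1 + p!(n-Suc j) * (if j=0 then 1 else p!(n-(j-1)))"
    proof (cases "j = 0")
      case True thus ?thesis using Z[OF e] 1 j by (simp add: mult_2)
    next
      case False
      hence "n-j+1 = n-(j-1)" "n - j < n" using j by auto
      thus ?thesis using Z[OF e] 1 False by simp
    qed
  qed
  thus ?thesis unfolding Phi_def PP_def
    by (auto simp add: ok_nth nth_upt less_Suc_eq_le)
qed

lemma PP_Psi:
  assumes "(xs,ys) \<in> (PP n 1 :: ('a::field list \<times> 'a list) set)"
  shows "Psi n xs ys \<in> Z_A n \<and> Phi n (Psi n xs ys) = (xs,ys)"
proof -
  have lx: "length xs = Suc n" and o: "ok 1 xs ys" using assms unfolding PP_def by auto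
  have ly: "length ys = n" using ok_len[OF o] lx by simp
  have E: "\<And>j. j<n \<Longrightarrow> xs!j * ys!j = 1 + xs!(j+1) * (if j=0 then 1 else xs!(j-1))"
    using o ok_nth[of xs ys 1] lx ly by simp
  let ?p = "Psi n xs ys"
  have lp: "length ?p = 2*n+1" by (simp add: Psi_def)
  have "\<forall>i\<in>{1..n}. ?p!i * ?p!(n+i) = 1 + ?p!(i-1) * (if i < n then ?p!(i+1) else 1)"
  proof
    fix i assume i: "i \<in> {1..n}"
    have a: "?p!i = xs!(n-i)" "?p!(n+i) = ys!(n-i)" "?p!(i-1) = xs!(n-i+1)"
      using i by (auto simp: Psi_def Suc_diff_le)
    show "?p!i * ?p!(n+i) = 1 + ?p!(i-1) * (if i < n then ?p!(i+1) else 1)"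
    proof (cases "i < n")
      case True
      have "?p!(i+1) = xs!(n-i-1)" using True by (simp add: Psi_def)
      thus ?thesis using E[of "n-i"] a True i by auto
    next
      case False
      thus ?thesis using E[of "n-i"] a i by auto
    qed
  qed
  hence "?p \<in> Z_A n" using lp unfolding Z_A_def by auto
  moreover have "Phi n ?p = (xs,ys)"
    unfolding Phi_def
    by (auto simp: Psi_def lx ly intro!: nth_equalityI)
  ultimately show ?thesis by simp
qed

lemma card_Z: "card (Z_A n :: 'a::{finite,field} list set) = card (UNIV :: 'a set) ^ Suc n"
proof -
  have inj: "inj_on (Phi n) (Z_A n :: 'a list set)"
  proof (rule inj_onI)
    fix p p' :: "'a list" assume p: "p \<in> Z_A n" "p' \<in> Z_A n" and eq: "Phi n p = Phi n p'"
    have l: "length p = 2*n+1" "length p' = 2*n+1" using p unfolding Z_A_def by auto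
    show "p = p'"
    proof (rule nth_equalityI)
      show "length p = length p'" using l by simp
      fix i assume i: "i < length p"
      show "p!i = p'!i"
      proof (cases "i \<le> n")
        case True
        have "map (\<lambda>j. p!(n-j)) [0..<Suc n] ! (n-i) = map (\<lambda>j. p'!(n-j)) [0..<Suc n] ! (n-i)"
          using eq unfolding Phi_def by simp
        thus ?thesis using True by (simp add: nth_upt less_Suc_eq_le)
      next
        case False
        have "\<forall>x\<in>{0..<n}. p!(2*n-x) = p'!(2*n-x)"
          using eq unfolding Phi_def by (simp add: map_eq_conv)
        moreover have "2*n-i \<in> {0..<n}" "2*n-(2*n-i) = i" using False i l by auto
        ultimately have "p!(2*n-(2*n-i)) = p'!(2*n-(2*n-i))" by blast
        thus ?thesis using False i l by simp
      qed
    qed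
  qed
  have "Phi n ` Z_A n = (PP n 1 :: ('a list \<times> 'a list) set)"
  proof
    show "Phi n ` Z_A n \<subseteq> PP n 1" using Phi_PP by blast
    show "PP n 1 \<subseteq> Phi n ` (Z_A n :: 'a list set)"
    proof
      fix q assume "q \<in> (PP n 1 :: ('a list \<times> 'a list) set)"
      then obtain xs ys where q: "q = (xs,ys)" "(xs,ys) \<in> (PP n 1 :: ('a list \<times> 'a list) set)"
        by (cases q) auto
      thus "q \<in> Phi n ` Z_A n" using PP_Psi[OF q(2)] by (metis image_eqI)
    qed
  qed
  hence "card (Z_A n :: 'a list set) = card (PP n (1::'a))"
    using card_image[OF inj] by simp
  thus ?thesis using card_PP[of 1 n] by simp
qed



lemma rapply_map: "rapply (map h xs) p = map (\<lambda>j. reval (h j) p) xs"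
  by (simp add: rapply_def)

lemma reg_iso_refl:
  assumes "\<forall>p\<in>X. length (p::'a::field list) = m"
  shows "reg_iso X X"
proof -
  have r: "regular_map_on Y (map RVar [0..<m])" for Y :: "'a list set"
    by (auto simp: regular_map_on_def)
  have id: "p \<in> X \<Longrightarrow> rapply (map RVar [0..<m]) p = p" for p
    proof -
    assume "p \<in> X"
    hence "m = length p" using assms by auto
    thus ?thesis by (simp add: rapply_map map_nth)
  qed
  show ?thesis unfolding reg_iso_def
    apply (rule exI[of _ "map RVar [0..<m]"], rule exI[of _ "map RVar [0..<m]"])
    using r[of X] id by simp
qed

lemma reg_iso_Z0:
  assumes n: "n \<ge> 1"
  shows "reg_iso (Z0_A n :: 'a::field list set) (Y_A (n - 1))"
proof -
  define f where "f = map (\<lambda>j. if j < n then RVar (j+1) else RVar (j+2)) [0..<2*n-1]"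
  define g where "g = map (\<lambda>i. if i=0 then RConst 0 else if i \<le> n then RVar (i-1)
      else if i = n+1 then RInv 0 else RVar (i-2)) [0..<2*n+1]"
  have rf: "regular_map_on (Z0_A n :: 'a list set) f"
    by (auto simp: regular_map_on_def f_def)
  have rg: "regular_map_on (Y_A (n-1) :: 'a list set) g"
    by (auto simp: regular_map_on_def g_def Y_A_def)
  have A: "rapply f p \<in> Y_A (n-1) \<and> rapply g (rapply f p) = p" if p: "p \<in> Z0_A n" for p :: "'a list"
  proof -
    have lp: "length p = 2*n+1" and p0: "p!0 = 0" and Z: "\<And>i. i \<in> {1..n} \<Longrightarrow>
       p!i * p!(n+i) = 1 + p!(i-1) * (if i < n then p!(i+1) else 1)"
      using p unfolding Z0_A_def Z_A_def by auto
    have e1: "p!1 * p!(n+1) = 1" using Z[of 1] n p0 by auto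
    let ?q = "rapply f p"
    have lq: "length ?q = 2*(n-1)+1" using n by (simp add: f_def rapply_map)
    have qn: "\<And>j. j < 2*n-1 \<Longrightarrow> ?q!j = (if j < n then p!(j+1) else p!(j+2))"
      by (simp add: f_def rapply_map)
    have q0: "?q!0 \<noteq> 0" using qn[of 0] n e1 by auto
    have "\<forall>i\<in>{1..n-1}. ?q!i * ?q!(n-1+i) = 1 + ?q!(i-1) * (if i < n-1 then ?q!(i+1) else 1)"
    proof
      fix i assume i: "i \<in> {1..n-1}"
      have a: "?q!i = p!(i+1)" "?q!(n-1+i) = p!(n+(i+1))" "?q!(i-1) = p!(i+1-1)"
        using i qn[of i] qn[of "n-1+i"] qn[of "i-1"] by auto
      have b: "i < n-1 \<Longrightarrow> ?q!(i+1) = p!(i+1+1)" using i qn[of "i+1"] by auto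
      have "i+1 \<in> {1..n}" using i by auto
      from Z[OF this] show "?q!i * ?q!(n-1+i) = 1 + ?q!(i-1) * (if i < n-1 then ?q!(i+1) else 1)"
        using a b i by (cases "i < n-1") auto
    qed
    hence "?q \<in> Y_A (n-1)" using lq q0 unfolding Y_A_def Z_A_def by auto
    moreover have "rapply g ?q = p"
    proof (rule nth_equalityI)
      show "length (rapply g ?q) = length p" using lp by (simp add: g_def rapply_map)
      fix i assume "i < length (rapply g ?q)"
      hence i: "i < 2*n+1" by (simp add: g_def rapply_map)
      show "rapply g ?q ! i = p ! i"
      proof -
        have "i = 0 \<or> (1 \<le> i \<and> i \<le> n) \<or> i = n+1 \<or> (n+1 < i \<and> i < 2*n+1)" using i by auto
        moreover have "i = n+1 \<Longrightarrow> ?thesis"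
          using inverse_unique[OF e1] qn[of 0] n by (simp add: g_def rapply_map)
        moreover have "n+1 < i \<Longrightarrow> i < 2*n+1 \<Longrightarrow> ?thesis"
        proof -
          assume a: "n+1 < i" "i < 2*n+1"
          then obtain k where k: "i = k+2" by (metis add.commute less_imp_Suc_add add_2_eq_Suc' less_Suc_eq_0_disj less_nat_zero_code nat.inject add_Suc_right plus_1_eq_Suc)
          show ?thesis using qn[of k] a k by (simp add: g_def rapply_map)
        qed
        ultimately show ?thesis using qn[of "i-1"] p0 n i
          by (auto simp: g_def rapply_map)
      qed
    qed
    ultimately show ?thesis by simp
  qed
  have B: "rapply g q \<in> Z0_A n \<and> rapply f (rapply g q) = q" if q: "q \<in> Y_A (n-1)" for q :: "'a list"
  proof -
    have lq: "length q = 2*n-1" and q0: "q!0 \<noteq> 0" and Y: "\<And>i. i \<in> {1..n-1} \<Longrightarrow>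
       q!i * q!(n-1+i) = 1 + q!(i-1) * (if i < n-1 then q!(i+1) else 1)"
      using q n unfolding Y_A_def Z_A_def by auto
    let ?p = "rapply g q"
    have lp: "length ?p = 2*n+1" by (simp add: g_def rapply_map)
    have pn: "\<And>i. i < 2*n+1 \<Longrightarrow> ?p!i = (if i=0 then 0 else if i \<le> n then q!(i-1)
      else if i = n+1 then inverse (q!0) else q!(i-2))"
      by (simp add: g_def rapply_map)
    have "\<forall>i\<in>{1..n}. ?p!i * ?p!(n+i) = 1 + ?p!(i-1) * (if i < n then ?p!(i+1) else 1)"
    proof
      fix i assume i: "i \<in> {1..n}"
      show "?p!i * ?p!(n+i) = 1 + ?p!(i-1) * (if i < n then ?p!(i+1) else 1)"
      proof (cases "i = 1")
        case True
        thus ?thesis using pn[of 1] pn[of "n+1"] pn[of 0] q0 n by auto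
      next
        case False
        hence i2: "i - 1 \<in> {1..n-1}" using i by auto
        have a: "?p!i = q!(i-1)" "?p!(n+i) = q!(n-1+(i-1))" "?p!(i-1) = q!(i-1-1)"
          using i False pn[of i] pn[of "n+i"] pn[of "i-1"] by (auto simp: numeral_2_eq_2)
        have b: "i < n \<Longrightarrow> ?p!(i+1) = q!(i-1+1)" using i pn[of "i+1"] by auto
        from Y[OF i2] show ?thesis using a b i False by (cases "i < n") auto
      qed
    qed
    hence "?p \<in> Z0_A n" using lp pn[of 0] unfolding Z0_A_def Z_A_def by auto
    moreover have "rapply f ?p = q"
    proof (rule nth_equalityI)
      show "length (rapply f ?p) = length q" using lq by (simp add: f_def rapply_map)
      fix j assume "j < length (rapply f ?p)"
      hence j: "j < 2*n-1" by (simp add: f_def rapply_map)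
      show "rapply f ?p ! j = q ! j"
        using j pn[of "j+1"] pn[of "j+2"] by (auto simp: f_def rapply_map)
    qed
    ultimately show ?thesis by simp
  qed
  show ?thesis unfolding reg_iso_def using rf rg A B by blast
qed


theorem mainTheorem8:
  fixes n :: nat
  assumes "n \<ge> 1"
  shows "(Z_A n :: 'k::field list set) = Y_A n \<union> Z0_A n
         \<and> Y_A n \<inter> (Z0_A n :: 'k list set) = {}
         \<and> reg_iso (Y_A n :: 'k list set) (Y_A n)
         \<and> reg_iso (Z0_A n :: 'k list set) (Y_A (n - 1))
         \<and> card (Z_A n :: 'q::{finite,field} list set) = card (UNIV :: 'q set) ^ (n + 1)"
proof (intro conjI)
  show "(Z_A n :: 'k::field list set) = Y_A n \<union> Z0_A n" by (auto simp: Y_A_def Z0_A_def)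
  show "Y_A n \<inter> (Z0_A n :: 'k list set) = {}" by (auto simp: Y_A_def Z0_A_def)
  show "reg_iso (Y_A n :: 'k list set) (Y_A n)"
    by (rule reg_iso_refl[of _ "2*n+1"]) (auto simp: Y_A_def Z_A_def)
  show "reg_iso (Z0_A n :: 'k list set) (Y_A (n - 1))" by (rule reg_iso_Z0[OF assms])
  show "card (Z_A n :: 'q::{finite,field} list set) = card (UNIV :: 'q set) ^ (n + 1)"
    using card_Z[where 'a='q, of n] by simp
qed

end
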